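(* Let $G$ be a finitely generated group, and let $M$ be a sequence of probability measures on $G$ that measures index uniformly. Then the $\limsup$ in the definition of $\textup{dc}_M(G)$ is actually a limit, and $\textup{dc}_{M'}(G)=\textup{dc}_M(G)$ for every other sequence $M'$ of probability measures on $G$ that measures index uniformly. Moreover, if $G$ is amenable then $\textup{dc}_\mu(G)=\textup{dc}_M(G)$ for every finitely additive left-invariant mean $\mu$ on $G$.
   Context: A sequence $M=(\mu_n)$ of probability measures measures index uniformly if $\mu_n(xH)\to1/[G:H]$ uniformly over $x\in G$ and subgroups $H$ (with $1/[G:H]=0$ for infinite index). $\textup{dc}_M(G)=\limsup_n(\mu_n\times\mu_n)(\{(x,y):xy=yx\})$. For a finitely additive left-invariant mean $\mu$ (positive normalised left-invariant linear functional on $\ell^\infty(G)$, $\mu(X)=\int1_X\,d\mu$), $\textup{dc}_\mu(G)=\int_x\int_y1_{\{xy=yx\}}\,d\mu(x)\,d\mu(y)$. *)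

theory Defs
  imports "HOL-Algebra.Algebra" "HOL-Probability.Probability"
begin

definition fin_gen :: "('a, 'b) monoid_scheme \<Rightarrow> bool" where
  "fin_gen G \<longleftrightarrow> (\<exists>S. finite S \<and> S \<subseteq> carrier G \<and> generate G S = carrier G)"

definition left_cosets :: "('a, 'b) monoid_scheme \<Rightarrow> 'a set \<Rightarrow> 'a set set" where
  "left_cosets G H = (\<lambda>x. x <#\<^bsub>G\<^esub> H) ` carrier G"

definition inv_index :: "('a, 'b) monoid_scheme \<Rightarrow> 'a set \<Rightarrow> real" where
  "inv_index G H = (if finite (left_cosets G H) then 1 / real (card (left_cosets G H)) else 0)"

definition prob_on :: "('a, 'b) monoid_scheme \<Rightarrow> 'a pmf \<Rightarrow> bool" where
  "prob_on G p \<longleftrightarrow> set_pmf p \<subseteq> carrier G"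

definition measures_index_uniformly :: "('a, 'b) monoid_scheme \<Rightarrow> (nat \<Rightarrow> 'a pmf) \<Rightarrow> bool" where
  "measures_index_uniformly G M \<longleftrightarrow>
     (\<forall>e>0. \<exists>N. \<forall>n\<ge>N. \<forall>x\<in>carrier G. \<forall>H. subgroup H G \<longrightarrow>
        \<bar>measure_pmf.prob (M n) (x <#\<^bsub>G\<^esub> H) - inv_index G H\<bar> < e)"

definition comm_prob :: "('a, 'b) monoid_scheme \<Rightarrow> 'a pmf \<Rightarrow> real" where
  "comm_prob G p = measure_pmf.prob (pair_pmf p p)
     {(x, y). x \<in> carrier G \<and> y \<in> carrier G \<and> x \<otimes>\<^bsub>G\<^esub> y = y \<otimes>\<^bsub>G\<^esub> x}"

definition dc_seq :: "('a, 'b) monoid_scheme \<Rightarrow> (nat \<Rightarrow> 'a pmf) \<Rightarrow> ereal" where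
  "dc_seq G M = limsup (\<lambda>n. ereal (comm_prob G (M n)))"

definition bdd_on :: "('a, 'b) monoid_scheme \<Rightarrow> ('a \<Rightarrow> real) \<Rightarrow> bool" where
  "bdd_on G f \<longleftrightarrow> (\<exists>B. \<forall>x\<in>carrier G. \<bar>f x\<bar> \<le> B)"

(* finitely additive left-invariant mean: positive normalised left-invariant linear
   functional on l^infty(G); functions are considered only via their values on carrier G *)
definition left_inv_mean :: "('a, 'b) monoid_scheme \<Rightarrow> (('a \<Rightarrow> real) \<Rightarrow> real) \<Rightarrow> bool" where
  "left_inv_mean G m \<longleftrightarrow>
     (\<forall>f g. bdd_on G f \<longrightarrow> bdd_on G g \<longrightarrow> m (\<lambda>x. f x + g x) = m f + m g) \<and>
     (\<forall>f c. bdd_on G f \<longrightarrow> m (\<lambda>x. c * f x) = c * m f) \<and>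
     (\<forall>f. bdd_on G f \<longrightarrow> (\<forall>x\<in>carrier G. f x \<ge> 0) \<longrightarrow> m f \<ge> 0) \<and>
     m (\<lambda>x. 1) = 1 \<and>
     (\<forall>f. \<forall>g\<in>carrier G. bdd_on G f \<longrightarrow> m (\<lambda>x. f (g \<otimes>\<^bsub>G\<^esub> x)) = m f)"

definition amenable :: "('a, 'b) monoid_scheme \<Rightarrow> bool" where
  "amenable G \<longleftrightarrow> (\<exists>m. left_inv_mean G m)"

definition dc_mean :: "('a, 'b) monoid_scheme \<Rightarrow> (('a \<Rightarrow> real) \<Rightarrow> real) \<Rightarrow> real" where
  "dc_mean G m = m (\<lambda>y. m (\<lambda>x. if x \<otimes>\<^bsub>G\<^esub> y = y \<otimes>\<^bsub>G\<^esub> x then 1 else 0))"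

end

theory Submission
  imports Defs
begin


definition Cz :: "('a, 'b) monoid_scheme \<Rightarrow> 'a \<Rightarrow> 'a set" where
  "Cz G x = {y \<in> carrier G. x \<otimes>\<^bsub>G\<^esub> y = y \<otimes>\<^bsub>G\<^esub> x}"

definition commset :: "('a, 'b) monoid_scheme \<Rightarrow> ('a \<times> 'a) set" where
  "commset G = {(x, y). x \<in> carrier G \<and> y \<in> carrier G \<and> x \<otimes>\<^bsub>G\<^esub> y = y \<otimes>\<^bsub>G\<^esub> x}"

definition cp :: "('a, 'b) monoid_scheme \<Rightarrow> 'a pmf \<Rightarrow> 'a pmf \<Rightarrow> real" where
  "cp G p q = measure_pmf.prob (pair_pmf p q) (commset G)"

definition ff :: "('a, 'b) monoid_scheme \<Rightarrow> 'a \<Rightarrow> real" where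
  "ff G x = inv_index G (Cz G x)"

lemma comm_prob_cp: "comm_prob G p = cp G p p"
  by (simp add: comm_prob_def cp_def commset_def)

lemma (in group) subgroup_Cz:
  assumes x: "x \<in> carrier G" shows "subgroup (Cz G x) G"
proof (rule subgroupI)
  show "Cz G x \<subseteq> carrier G" by (auto simp: Cz_def)
  show "Cz G x \<noteq> {}" using x by (auto simp: Cz_def intro!: exI[of _ \<one>])
next
  fix a assume a: "a \<in> Cz G x"
  hence ac: "a \<in> carrier G" and e: "x \<otimes> a = a \<otimes> x" by (auto simp: Cz_def)
  have "x \<otimes> inv a = inv a \<otimes> (a \<otimes> x) \<otimes> inv a" using ac x by (simp add: m_assoc[symmetric])
  also have "\<dots> = inv a \<otimes> (x \<otimes> a) \<otimes> inv a" by (simp add: e)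
  also have "\<dots> = inv a \<otimes> x" using ac x by (simp add: m_assoc)
  finally have "x \<otimes> inv a = inv a \<otimes> x" .
  thus "inv a \<in> Cz G x" using ac by (simp add: Cz_def)
next
  fix a b assume "a \<in> Cz G x" "b \<in> Cz G x"
  hence ac: "a \<in> carrier G" "b \<in> carrier G" and e: "x \<otimes> a = a \<otimes> x" "x \<otimes> b = b \<otimes> x"
    by (auto simp: Cz_def)
  have "x \<otimes> (a \<otimes> b) = (x \<otimes> a) \<otimes> b" using ac x by (simp add: m_assoc)
  also have "\<dots> = (a \<otimes> x) \<otimes> b" using e by simp
  also have "\<dots> = a \<otimes> (x \<otimes> b)" using ac x by (simp add: m_assoc)
  also have "\<dots> = a \<otimes> (b \<otimes> x)" using e by simp
  also have "\<dots> = (a \<otimes> b) \<otimes> x" using ac x by (simp add: m_assoc)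
  finally show "a \<otimes> b \<in> Cz G x" using ac by (simp add: Cz_def)
qed

lemma inv_index_bounds: "0 \<le> inv_index G H" "inv_index G H \<le> 1"
  by (auto simp: inv_index_def divide_le_eq)

lemma ff_bounds: "0 \<le> ff G x" "ff G x \<le> 1"
  by (auto simp: ff_def inv_index_bounds)

lemma uniform_Cz:
  assumes "group G" "measures_index_uniformly G M" "e > 0"
  shows "\<exists>N. \<forall>n\<ge>N. \<forall>x\<in>carrier G. \<bar>measure_pmf.prob (M n) (Cz G x) - ff G x\<bar> < e"
proof -
  interpret group G by fact
  obtain N where N: "\<forall>n\<ge>N. \<forall>x\<in>carrier G. \<forall>H. subgroup H G \<longrightarrow>
        \<bar>measure_pmf.prob (M n) (x <#\<^bsub>G\<^esub> H) - inv_index G H\<bar> < e"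
    using assms(2,3) unfolding measures_index_uniformly_def by blast
  show ?thesis
  proof (intro exI allI impI ballI)
    fix n x assume n: "n \<ge> N" and x: "x \<in> carrier G"
    have "Cz G x \<subseteq> carrier G" by (auto simp: Cz_def)
    hence "\<one>\<^bsub>G\<^esub> <#\<^bsub>G\<^esub> Cz G x = Cz G x" by (rule lcos_mult_one)
    thus "\<bar>measure_pmf.prob (M n) (Cz G x) - ff G x\<bar> < e"
      using N[rule_format, OF n one_closed subgroup_Cz[OF x]] by (simp add: ff_def)
  qed
qed

lemma pair_prob:
  fixes p q :: "'a pmf"
  shows "measure_pmf.prob (pair_pmf p q) A = (\<integral>x. measure_pmf.prob q {y. (x,y) \<in> A} \<partial>p)"
proof -
  have e: "pair_pmf p q = bind_pmf p (\<lambda>x. map_pmf (Pair x) q)"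
    by (simp add: pair_pmf_def map_pmf_def)
  have "measure_pmf.prob (pair_pmf p q) A = (\<integral>x. measure_pmf.prob (map_pmf (Pair x) q) A \<partial>p)"
    unfolding e measure_pmf_bind
    by (rule measure_pmf.measure_bind) (auto simp: space_subprob_algebra measure_pmf.subprob_space_axioms)
  also have "\<dots> = (\<integral>x. measure_pmf.prob q {y. (x,y) \<in> A} \<partial>p)"
    by (simp add: vimage_def)
  finally show ?thesis .
qed

lemma cp_int:
  "cp G p q = (\<integral>x. (if x \<in> carrier G then measure_pmf.prob q (Cz G x) else 0) \<partial>p)"
  unfolding cp_def pair_prob
  by (rule Bochner_Integration.integral_cong) (auto simp: commset_def Cz_def)

lemma cp_sym: "cp G p q = cp G q p"
proof -
  have "cp G p q = measure_pmf.prob (pair_pmf q p) ((\<lambda>(x, y). (y, x)) -` commset G)"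
    unfolding cp_def by (subst pair_commute_pmf) (simp only: measure_map_pmf)
  also have "(\<lambda>(x, y). (y, x)) -` commset G = commset G"
    by (auto simp: commset_def)
  finally show ?thesis by (simp add: cp_def)
qed

lemma cp_approx:
  assumes "prob_on G p" "\<forall>x\<in>carrier G. \<bar>measure_pmf.prob q (Cz G x) - ff G x\<bar> < e"
  shows "\<bar>cp G p q - (\<integral>x. ff G x \<partial>p)\<bar> \<le> e"
proof -
  define g where "g x = (if x \<in> carrier G then measure_pmf.prob q (Cz G x) else 0)" for x
  have ig: "integrable p g"
    by (rule measure_pmf.integrable_const_bound[where B=1]) (auto simp: g_def)
  have iff: "integrable p (ff G)"
    by (rule measure_pmf.integrable_const_bound[where B=1]) (auto simp: ff_bounds)
  have "cp G p q - (\<integral>x. ff G x \<partial>p) = (\<integral>x. g x - ff G x \<partial>p)"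
    using ig iff by (simp add: cp_int g_def[abs_def])
  also have "\<bar>\<dots>\<bar> \<le> (\<integral>x. \<bar>g x - ff G x\<bar> \<partial>p)" by (rule integral_abs_bound)
  also have "\<dots> \<le> (\<integral>x. e \<partial>p)"
  proof (rule integral_mono_AE)
    show "integrable p (\<lambda>x. \<bar>g x - ff G x\<bar>)" using ig iff by auto
    show "integrable p (\<lambda>x. e)" by simp
    show "AE x in p. \<bar>g x - ff G x\<bar> \<le> e"
      using assms unfolding prob_on_def
      by (intro AE_pmfI) (auto simp: g_def less_imp_le)
  qed
  also have "\<dots> = e" by simp
  finally show ?thesis .
qed




lemma close_seq:
  assumes G: "group G" and p1: "\<forall>n. prob_on G (M n)" and p2: "\<forall>n. prob_on G (M' n)"
    and u1: "measures_index_uniformly G M" and u2: "measures_index_uniformly G M'"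
    and e: "e > 0"
  shows "\<exists>N. \<forall>n\<ge>N. \<forall>k\<ge>N. \<bar>comm_prob G (M n) - comm_prob G (M' k)\<bar> < e"
proof -
  have e5: "e / 5 > 0" using e by simp
  obtain N1 where N1: "\<forall>n\<ge>N1. \<forall>x\<in>carrier G. \<bar>measure_pmf.prob (M n) (Cz G x) - ff G x\<bar> < e / 5"
    using uniform_Cz[OF G u1 e5] by blast
  obtain N2 where N2: "\<forall>n\<ge>N2. \<forall>x\<in>carrier G. \<bar>measure_pmf.prob (M' n) (Cz G x) - ff G x\<bar> < e / 5"
    using uniform_Cz[OF G u2 e5] by blast
  show ?thesis
  proof (intro exI[of _ "max N1 N2"] allI impI)
    fix n k assume n: "max N1 N2 \<le> n" and k: "max N1 N2 \<le> k"
    have a1: "\<forall>x\<in>carrier G. \<bar>measure_pmf.prob (M n) (Cz G x) - ff G x\<bar> < e / 5"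
      using N1 n by (meson max.boundedE)
    have a2: "\<forall>x\<in>carrier G. \<bar>measure_pmf.prob (M' k) (Cz G x) - ff G x\<bar> < e / 5"
      using N2 k by (meson max.boundedE)
    have h1: "\<bar>cp G (M n) (M n) - (\<integral>x. ff G x \<partial>M n)\<bar> \<le> e / 5"
      using p1 a1 by (intro cp_approx) auto
    have h2: "\<bar>cp G (M n) (M' k) - (\<integral>x. ff G x \<partial>M n)\<bar> \<le> e / 5"
      using p1 a2 by (intro cp_approx) auto
    have h3: "\<bar>cp G (M' k) (M n) - (\<integral>x. ff G x \<partial>M' k)\<bar> \<le> e / 5"
      using p2 a1 by (intro cp_approx) auto
    have h4: "\<bar>cp G (M' k) (M' k) - (\<integral>x. ff G x \<partial>M' k)\<bar> \<le> e / 5"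
      using p2 a2 by (intro cp_approx) auto
    have s: "cp G (M' k) (M n) = cp G (M n) (M' k)" by (rule cp_sym)
    show "\<bar>comm_prob G (M n) - comm_prob G (M' k)\<bar> < e"
      using h1 h2 h3 h4 s e unfolding comm_prob_cp abs_le_iff abs_less_iff by linarith
  qed
qed

lemma conv_seq:
  assumes G: "group G" and p1: "\<forall>n. prob_on G (M n)" and u1: "measures_index_uniformly G M"
  shows "\<exists>L. (\<lambda>n. comm_prob G (M n)) \<longlonglongrightarrow> L \<and> dc_seq G M = ereal L"
proof -
  have "Cauchy (\<lambda>n. comm_prob G (M n))"
  proof (rule CauchyI)
    fix e :: real assume "0 < e"
    from close_seq[OF G p1 p1 u1 u1 this] show "\<exists>N. \<forall>m\<ge>N. \<forall>n\<ge>N. norm (comm_prob G (M m) - comm_prob G (M n)) < e"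
      by simp
  qed
  then obtain L where L: "(\<lambda>n. comm_prob G (M n)) \<longlonglongrightarrow> L"
    using Cauchy_convergent_iff convergent_def by blast
  hence "(\<lambda>n. ereal (comm_prob G (M n))) \<longlonglongrightarrow> ereal L" by simp
  hence "dc_seq G M = ereal L"
    unfolding dc_seq_def by (intro lim_imp_Limsup) simp_all
  with L show ?thesis by blast
qed

lemma lim_eq_close:
  fixes a b :: "nat \<Rightarrow> real"
  assumes "a \<longlonglongrightarrow> L" "b \<longlonglongrightarrow> L'"
    and "\<forall>e>0. \<exists>N. \<forall>n\<ge>N. \<bar>a n - b n\<bar> < e"
  shows "L = L'"
proof -
  have "(\<lambda>n. a n - b n) \<longlonglongrightarrow> L - L'" using assms(1,2) by (rule tendsto_diff)
  moreover have "(\<lambda>n. a n - b n) \<longlonglongrightarrow> 0"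
    by (rule LIMSEQ_I) (use assms(3) in simp)
  ultimately have "L - L' = 0" by (rule LIMSEQ_unique)
  thus ?thesis by simp
qed




lemma bdd_onI: "(\<And>x. x \<in> carrier G \<Longrightarrow> \<bar>f x\<bar> \<le> B) \<Longrightarrow> bdd_on G f"
  by (auto simp: bdd_on_def)

lemma bdd_on_add: "bdd_on G f \<Longrightarrow> bdd_on G g \<Longrightarrow> bdd_on G (\<lambda>x. f x + g x)"
proof -
  assume "bdd_on G f" "bdd_on G g"
  then obtain B C where "\<forall>x\<in>carrier G. \<bar>f x\<bar> \<le> B" "\<forall>x\<in>carrier G. \<bar>g x\<bar> \<le> C"
    by (auto simp: bdd_on_def)
  thus ?thesis by (intro bdd_onI[where B="B + C"]) (auto intro: abs_triangle_ineq[THEN order_trans] add_mono)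
qed

lemma bdd_on_scal: "bdd_on G f \<Longrightarrow> bdd_on G (\<lambda>x. c * f x)"
proof -
  assume "bdd_on G f"
  then obtain B where "\<forall>x\<in>carrier G. \<bar>f x\<bar> \<le> B" by (auto simp: bdd_on_def)
  thus ?thesis by (intro bdd_onI[where B="\<bar>c\<bar> * B"]) (auto simp: abs_mult intro: mult_left_mono)
qed

lemma bdd_on_sum: "finite F \<Longrightarrow> (\<forall>i\<in>F. bdd_on G (f i)) \<Longrightarrow> bdd_on G (\<lambda>x. \<Sum>i\<in>F. f i x)"
  by (induction F rule: finite_induct) (auto intro: bdd_on_add bdd_onI[where B=0])

lemma bdd_on_ind: "bdd_on G (\<lambda>x. if P x then 1 else 0)"
  by (intro bdd_onI[where B=1]) auto

context
  fixes G :: "('a, 'b) monoid_scheme" (structure) and m :: "('a \<Rightarrow> real) \<Rightarrow> real"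
  assumes grp: "group G" and lm: "left_inv_mean G m"
begin

lemma m_add: "bdd_on G f \<Longrightarrow> bdd_on G g \<Longrightarrow> m (\<lambda>x. f x + g x) = m f + m g"
  using lm unfolding left_inv_mean_def by blast
lemma m_scal: "bdd_on G f \<Longrightarrow> m (\<lambda>x. c * f x) = c * m f"
  using lm unfolding left_inv_mean_def by blast
lemma m_pos: "bdd_on G f \<Longrightarrow> (\<forall>x\<in>carrier G. f x \<ge> 0) \<Longrightarrow> m f \<ge> 0"
  using lm unfolding left_inv_mean_def by blast
lemma m_one: "m (\<lambda>x. 1) = 1"
  using lm unfolding left_inv_mean_def by blast
lemma m_inv: "g \<in> carrier G \<Longrightarrow> bdd_on G f \<Longrightarrow> m (\<lambda>x. f (g \<otimes>\<^bsub>G\<^esub> x)) = m f"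
  using lm unfolding left_inv_mean_def by blast

lemma m_const: "m (\<lambda>x. c) = c"
proof -
  have "m (\<lambda>x. c * (\<lambda>x. 1::real) x) = c * m (\<lambda>x. 1)"
    by (rule m_scal) (rule bdd_onI[where B=1], simp)
  thus ?thesis by (simp add: m_one)
qed

lemma m_mono:
  assumes "bdd_on G f" "bdd_on G g" "\<And>x. x \<in> carrier G \<Longrightarrow> f x \<le> g x"
  shows "m f \<le> m g"
proof -
  have bh: "bdd_on G (\<lambda>x. g x - f x)"
    using bdd_on_add[OF assms(2) bdd_on_scal[OF assms(1), of "-1"]] by simp
  have "g = (\<lambda>x. f x + (g x - f x))" by simp
  hence "m g = m f + m (\<lambda>x. g x - f x)"
    using m_add[OF assms(1) bh] by simp
  moreover have "m (\<lambda>x. g x - f x) \<ge> 0" using bh assms(3) by (intro m_pos) auto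
  ultimately show ?thesis by simp
qed

lemma m_cong:
  assumes "bdd_on G f" "bdd_on G g" "\<And>x. x \<in> carrier G \<Longrightarrow> f x = g x"
  shows "m f = m g"
  using m_mono[OF assms(1,2)] m_mono[OF assms(2,1)] assms(3) by (simp add: order_antisym)

lemma m_sum: "finite F \<Longrightarrow> (\<forall>i\<in>F. bdd_on G (f i)) \<Longrightarrow> m (\<lambda>x. \<Sum>i\<in>F. f i x) = (\<Sum>i\<in>F. m (f i))"
proof (induction F rule: finite_induct)
  case empty
  then show ?case using m_const[of 0] by simp
next
  case (insert a F)
  have "m (\<lambda>x. \<Sum>i\<in>insert a F. f i x) = m (\<lambda>x. f a x + (\<Sum>i\<in>F. f i x))"
    using insert by simp
  also have "\<dots> = m (f a) + m (\<lambda>x. \<Sum>i\<in>F. f i x)"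
    using insert by (intro m_add bdd_on_sum) auto
  finally show ?case using insert by simp
qed

lemma m_indicator:
  assumes H: "subgroup H G"
  shows "m (\<lambda>x. if x \<in> H then 1 else 0) = inv_index G H"
proof -
  interpret group G by (rule grp)
  define \<iota> where "\<iota> c = (\<lambda>x. if x \<in> c then 1 else (0::real))" for c :: "'a set"
  define v where "v = m (\<iota> H)"
  have bi: "bdd_on G (\<iota> c)" for c unfolding \<iota>_def by (rule bdd_on_ind)
  have step1: "m (\<iota> c) = v" if c: "c \<in> left_cosets G H" for c
  proof -
    obtain g where g: "g \<in> carrier G" "c = g <# H" using c by (auto simp: left_cosets_def)
    have "m (\<lambda>x. \<iota> H (inv g \<otimes> x)) = v" unfolding v_def using g bi by (intro m_inv) auto
    moreover have "m (\<lambda>x. \<iota> H (inv g \<otimes> x)) = m (\<iota> c)"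
    proof (rule m_cong)
      show "bdd_on G (\<lambda>x. \<iota> H (inv g \<otimes> x))" unfolding \<iota>_def by (rule bdd_on_ind)
      show "bdd_on G (\<iota> c)" by (rule bi)
      fix x assume x: "x \<in> carrier G"
      have "inv g \<otimes> x \<in> H \<longleftrightarrow> x \<in> g <# H"
        using subgroup.lcos_module_rev[OF H grp g(1) x] subgroup.lcos_module_imp[OF H grp g(1)] by blast
      thus "\<iota> H (inv g \<otimes> x) = \<iota> c x" by (simp add: \<iota>_def g(2))
    qed
    ultimately show ?thesis by simp
  qed
  have step2: "x \<in> c \<longleftrightarrow> c = x <# H" if x: "x \<in> carrier G" and c: "c \<in> left_cosets G H" for x c
  proof -
    obtain g where g: "g \<in> carrier G" "c = g <# H" using c by (auto simp: left_cosets_def)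
    show ?thesis
      using l_repr_independence[OF _ g(1) H, of x] lcos_self[OF x H] g by auto
  qed
  have step3: "(\<Sum>c\<in>F. \<iota> c x) = (if x <# H \<in> F then 1 else 0)"
    if F: "F \<subseteq> left_cosets G H" and fF: "finite F" and x: "x \<in> carrier G" for F x
  proof -
    have "(\<Sum>c\<in>F. \<iota> c x) = (\<Sum>c\<in>F. if x <# H = c then 1 else 0)"
      using F step2[OF x] by (intro sum.cong) (auto simp: \<iota>_def)
    also have "\<dots> = (if x <# H \<in> F then 1 else 0)"
      using fF by (simp add: sum.delta')
    finally show ?thesis .
  qed
  have step4: "m (\<lambda>x. \<Sum>c\<in>F. \<iota> c x) = real (card F) * v"
    if F: "F \<subseteq> left_cosets G H" "finite F" for F
  proof -
    have "m (\<lambda>x. \<Sum>c\<in>F. \<iota> c x) = (\<Sum>c\<in>F. m (\<iota> c))" using F bi by (intro m_sum) auto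
    also have "\<dots> = (\<Sum>c\<in>F. v)" using F step1 by (intro sum.cong) auto
    finally show ?thesis by simp
  qed
  have v0: "v \<ge> 0" unfolding v_def \<iota>_def by (rule m_pos[OF bdd_on_ind]) auto
  show ?thesis
  proof (cases "finite (left_cosets G H)")
    case True
    have mem: "x <# H \<in> left_cosets G H" if "x \<in> carrier G" for x
      using that by (auto simp: left_cosets_def)
    have "m (\<lambda>x. \<Sum>c\<in>left_cosets G H. \<iota> c x) = m (\<lambda>x. 1)"
      by (rule m_cong[OF bdd_on_sum bdd_onI[where B=1]])
        (auto simp: True bi step3[OF subset_refl True] left_cosets_def[symmetric] intro: mem)
    hence "real (card (left_cosets G H)) * v = 1" using step4[OF _ True] m_one by simp
    moreover hence "real (card (left_cosets G H)) \<noteq> 0" by (metis mult_zero_left zero_neq_one)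
    ultimately have "v = 1 / real (card (left_cosets G H))" by (simp add: eq_divide_eq mult.commute)
    thus ?thesis using True by (simp add: inv_index_def v_def \<iota>_def)
  next
    case False
    have le: "real n * v \<le> 1" for n
    proof -
      obtain F where F: "F \<subseteq> left_cosets G H" "finite F" "card F = n"
        using infinite_arbitrarily_large[OF False] by blast
      have "m (\<lambda>x. \<Sum>c\<in>F. \<iota> c x) \<le> m (\<lambda>x. 1)"
        by (rule m_mono[OF bdd_on_sum bdd_onI[where B=1]]) (auto simp: F bi step3)
      thus ?thesis using step4[OF F(1,2)] F(3) m_one by simp
    qed
    have "v = 0"
    proof (rule ccontr)
      assume "v \<noteq> 0"
      hence vp: "v > 0" using v0 by simp
      obtain n where "1 / v < real n" using reals_Archimedean2 by blast
      hence "1 < real n * v" using vp by (simp add: field_simps)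
      thus False using le[of n] by simp
    qed
    thus ?thesis using False by (simp add: inv_index_def v_def \<iota>_def)
  qed
qed

end



lemma finite_approx:
  fixes p :: "'a pmf" assumes e: "e > 0"
  shows "\<exists>S. finite S \<and> S \<subseteq> set_pmf p \<and> measure_pmf.prob p S > 1 - e"
proof -
  define SP where "SP = set_pmf p"
  define f where "f = from_nat_into SP"
  define A where "A n = f ` {..<n}" for n
  have Xne: "SP \<noteq> {}" and Xc: "countable SP" by (auto simp: SP_def set_pmf_not_empty)
  have inc: "incseq A" unfolding A_def incseq_def by (auto intro: image_mono)
  have U: "(\<Union>n. A n) = SP"
  proof -
    have "(\<Union>n. A n) = range f" unfolding A_def by auto
    also have "\<dots> = SP" unfolding f_def using Xne Xc by simp
    finally show ?thesis .
  qed
  have "measure_pmf.prob p SP = 1"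
    by (subst measure_pmf.prob_eq_1) (auto simp: SP_def intro: AE_pmfI)
  hence lim: "(\<lambda>n. measure_pmf.prob p (A n)) \<longlonglongrightarrow> 1"
    using measure_pmf.finite_Lim_measure_incseq[of A p] inc U by simp
  have "1 - e < 1" using e by simp
  from order_tendstoD(1)[OF lim this] obtain n where "1 - e < measure_pmf.prob p (A n)"
    by (auto simp: eventually_sequentially)
  moreover have "A n \<subseteq> set_pmf p" unfolding A_def f_def SP_def
    using range_from_nat_into_subset[OF Xne] SP_def by auto
  moreover have "finite (A n)" unfolding A_def by simp
  ultimately show ?thesis by blast
qed

context
  fixes G :: "('a, 'b) monoid_scheme" (structure) and m :: "('a \<Rightarrow> real) \<Rightarrow> real"
  assumes grp: "group G" and lm: "left_inv_mean G m"
begin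

lemma bdd_ff: "bdd_on G (ff G)"
proof (rule bdd_onI[where B=1])
  fix x show "\<bar>ff G x\<bar> \<le> 1" using ff_bounds[of G x] by simp
qed

lemma m_ind_Cz:
  assumes x: "x \<in> carrier G"
  shows "m (\<lambda>y. if y \<in> Cz G x then 1 else 0) = ff G x"
  using m_indicator[OF grp lm group.subgroup_Cz[OF grp x]] by (simp add: ff_def)

lemma dc_mean_ff: "dc_mean G m = m (ff G)"
proof -
  have inner: "m (\<lambda>x. if x \<otimes> y = y \<otimes> x then 1 else 0) = ff G y" if y: "y \<in> carrier G" for y
  proof -
    have "m (\<lambda>x. if x \<otimes> y = y \<otimes> x then 1 else 0) = m (\<lambda>x. if x \<in> Cz G y then 1 else 0)"
      by (rule m_cong[OF grp lm bdd_on_ind bdd_on_ind]) (auto simp: Cz_def)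
    thus ?thesis using m_ind_Cz[OF y] by simp
  qed
  have b: "bdd_on G (\<lambda>y. m (\<lambda>x. if x \<otimes> y = y \<otimes> x then 1 else 0))"
  proof (rule bdd_onI[where B=1])
    fix y assume "y \<in> carrier G" thus "\<bar>m (\<lambda>x. if x \<otimes> y = y \<otimes> x then 1 else 0)\<bar> \<le> 1"
      using inner ff_bounds[of G y] by simp
  qed
  show ?thesis unfolding dc_mean_def
    by (rule m_cong[OF grp lm b bdd_ff]) (simp add: inner)
qed

lemma mean_lim:
  assumes p1: "\<forall>n. prob_on G (M n)" and u1: "measures_index_uniformly G M"
  shows "(\<lambda>n. comm_prob G (M n)) \<longlonglongrightarrow> m (ff G)"
proof (rule LIMSEQ_I)
  fix r :: real assume r: "0 < r"
  define e where "e = r / 5"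
  have e: "e > 0" using r by (simp add: e_def)
  obtain N where N: "\<forall>n\<ge>N. \<forall>x\<in>carrier G. \<bar>measure_pmf.prob (M n) (Cz G x) - ff G x\<bar> < e"
    using uniform_Cz[OF grp u1 e] by blast
  show "\<exists>no. \<forall>n\<ge>no. norm (comm_prob G (M n) - m (ff G)) < r"
  proof (intro exI allI impI)
    fix n assume n: "N \<le> n"
    define p where "p = M n"
    have a1: "\<forall>x\<in>carrier G. \<bar>measure_pmf.prob p (Cz G x) - ff G x\<bar> < e"
      using N n by (simp add: p_def)
    have pp: "prob_on G p" using p1 by (simp add: p_def)
    define g where "g y = measure_pmf.prob p (Cz G y)" for y
    have bg: "bdd_on G g" by (rule bdd_onI[where B=1]) (simp add: g_def)
    have bfe: "bdd_on G (\<lambda>y. ff G y + e)" by (intro bdd_on_add bdd_ff bdd_onI[where B=e]) (use e in auto)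
    have bge: "bdd_on G (\<lambda>y. g y + e)" by (intro bdd_on_add bg bdd_onI[where B=e]) (use e in auto)
    have mfe: "m (\<lambda>y. ff G y + e) = m (ff G) + e"
      using m_add[OF grp lm bdd_ff bdd_onI[where B=e]] m_const[OF grp lm] e by simp
    have mge: "m (\<lambda>y. g y + e) = m g + e"
      using m_add[OF grp lm bg bdd_onI[where B=e]] m_const[OF grp lm] e by simp
    have A1: "m g \<le> m (ff G) + e"
      using m_mono[OF grp lm bg bfe] a1 mfe by (force simp: g_def abs_less_iff)
    have A2: "m (ff G) \<le> m g + e"
      using m_mono[OF grp lm bdd_ff bge] a1 mge by (force simp: g_def abs_less_iff)
    obtain S where S: "finite S" "S \<subseteq> set_pmf p" "measure_pmf.prob p S > 1 - e"
      using finite_approx[OF e, where p=p] by blast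
    have Sc: "S \<subseteq> carrier G" using S(2) pp by (auto simp: prob_on_def)
    have compl: "measure_pmf.prob p (UNIV - S) < e"
      using measure_pmf.prob_compl[of S p] S(3) by simp
    define T where "T y = (\<Sum>x\<in>S. pmf p x * (if y \<in> Cz G x then 1 else 0))" for y
    have bT: "bdd_on G T" unfolding T_def
      by (intro bdd_on_sum S ballI bdd_on_scal bdd_on_ind)
    have Teq: "T y = measure_pmf.prob p (S \<inter> Cz G y)" if y: "y \<in> carrier G" for y
    proof -
      have "T y = (\<Sum>x\<in>S. if x \<in> Cz G y then pmf p x else 0)"
        unfolding T_def using Sc y by (intro sum.cong) (auto simp: Cz_def)
      also have "\<dots> = sum (pmf p) (S \<inter> Cz G y)" using S(1) by (simp add: sum.inter_restrict)
      also have "\<dots> = measure_pmf.prob p (S \<inter> Cz G y)"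
        using S(1) by (simp add: measure_measure_pmf_finite)
      finally show ?thesis .
    qed
    have B: "T y \<le> g y \<and> g y \<le> T y + e" if y: "y \<in> carrier G" for y
    proof
      show "T y \<le> g y" unfolding Teq[OF y] g_def
        by (rule measure_pmf.finite_measure_mono) auto
      have "g y \<le> measure_pmf.prob p ((S \<inter> Cz G y) \<union> (UNIV - S))"
        unfolding g_def by (rule measure_pmf.finite_measure_mono) auto
      also have "\<dots> \<le> measure_pmf.prob p (S \<inter> Cz G y) + measure_pmf.prob p (UNIV - S)"
        by (rule measure_subadditive) (auto simp: measure_pmf.emeasure_eq_measure)
      finally show "g y \<le> T y + e" using compl Teq[OF y] by simp
    qed
    have bTe: "bdd_on G (\<lambda>y. T y + e)" by (intro bdd_on_add bT bdd_onI[where B=e]) (use e in auto)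
    have mTe: "m (\<lambda>y. T y + e) = m T + e"
      using m_add[OF grp lm bT bdd_onI[where B=e]] m_const[OF grp lm] e by simp
    have B1: "m T \<le> m g" using m_mono[OF grp lm bT bg] B by blast
    have B2: "m g \<le> m T + e" using m_mono[OF grp lm bg bTe] B mTe by force
    have C: "m T = (\<Sum>x\<in>S. pmf p x * ff G x)"
    proof -
      have "m T = (\<Sum>x\<in>S. m (\<lambda>y. pmf p x * (if y \<in> Cz G x then 1 else 0)))"
        unfolding T_def by (rule m_sum[OF grp lm S(1)]) (auto intro: bdd_on_scal bdd_on_ind)
      also have "\<dots> = (\<Sum>x\<in>S. pmf p x * ff G x)"
      proof (rule sum.cong)
        fix x assume "x \<in> S"
        hence x: "x \<in> carrier G" using Sc by auto
        show "m (\<lambda>y. pmf p x * (if y \<in> Cz G x then 1 else 0)) = pmf p x * ff G x"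
          using m_scal[OF grp lm bdd_on_ind] m_ind_Cz[OF x] by simp
      qed simp
      finally show ?thesis .
    qed
    define h where "h x = ff G x * indicator S x" for x
    have ih: "integrable p h"
      by (rule measure_pmf.integrable_const_bound[where B=1]) (auto simp: h_def ff_bounds indicator_def)
    have iff: "integrable p (ff G)"
      by (rule measure_pmf.integrable_const_bound[where B=1]) (auto simp: ff_bounds)
    have hS: "(\<integral>x. h x \<partial>p) = (\<Sum>x\<in>S. pmf p x * ff G x)"
    proof -
      have "(\<integral>x. h x \<partial>p) = (\<Sum>a\<in>S. h a * pmf p a)"
        by (rule integral_measure_pmf_real) (auto simp: S(1) h_def indicator_def split: if_splits)
      also have "\<dots> = (\<Sum>x\<in>S. pmf p x * ff G x)"
        by (rule sum.cong) (auto simp: h_def)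
      finally show ?thesis .
    qed
    have D1: "(\<integral>x. ff G x - h x \<partial>p) \<ge> 0"
      by (rule Bochner_Integration.integral_nonneg) (auto simp: h_def ff_bounds indicator_def)
    have idiff: "integrable p (\<lambda>x. ff G x - h x)" by (rule Bochner_Integration.integrable_diff[OF iff ih])
    have iind: "integrable p (\<lambda>x. indicator (UNIV - S) x :: real)"
      by (rule measure_pmf.integrable_const_bound[where B=1]) (auto simp: indicator_def)
    have D2: "(\<integral>x. ff G x - h x \<partial>p) \<le> (\<integral>x. indicator (UNIV - S) x \<partial>p)"
      by (rule Bochner_Integration.integral_mono[OF idiff iind]) (auto simp: h_def ff_bounds indicator_def)
    have D3: "(\<integral>x. indicator (UNIV - S) x \<partial>p) = measure_pmf.prob p (UNIV - S)"
      by simp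
    have D: "\<bar>(\<Sum>x\<in>S. pmf p x * ff G x) - (\<integral>x. ff G x \<partial>p)\<bar> \<le> e"
      using D1 D2 D3 compl hS ih iff by (simp add: abs_le_iff)
    have E: "\<bar>comm_prob G p - (\<integral>x. ff G x \<partial>p)\<bar> \<le> e"
      unfolding comm_prob_cp by (rule cp_approx[OF pp a1])
    show "norm (comm_prob G (M n) - m (ff G)) < r"
      using A1 A2 B1 B2 C D E e unfolding p_def[symmetric] e_def real_norm_def abs_le_iff abs_less_iff
      by linarith
  qed
qed

end


theorem theorem1p19:
  fixes G :: "('a, 'b) monoid_scheme" and M :: "nat \<Rightarrow> 'a pmf"
  assumes "group G" and "fin_gen G"
    and "\<forall>n. prob_on G (M n)"
    and "measures_index_uniformly G M"
  shows "((\<lambda>n. ereal (comm_prob G (M n))) \<longlonglongrightarrow> dc_seq G M)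
    \<and> (\<forall>M'. (\<forall>n. prob_on G (M' n)) \<longrightarrow> measures_index_uniformly G M'
               \<longrightarrow> dc_seq G M' = dc_seq G M)
    \<and> (amenable G \<longrightarrow> (\<forall>m. left_inv_mean G m \<longrightarrow> ereal (dc_mean G m) = dc_seq G M))"
proof -
  obtain L where L: "(\<lambda>n. comm_prob G (M n)) \<longlonglongrightarrow> L" and dL: "dc_seq G M = ereal L"
    using conv_seq[OF assms(1,3,4)] by blast
  have c1: "(\<lambda>n. ereal (comm_prob G (M n))) \<longlonglongrightarrow> dc_seq G M"
    using L dL by simp
  have c2: "dc_seq G M' = dc_seq G M"
    if p2: "\<forall>n. prob_on G (M' n)" and u2: "measures_index_uniformly G M'" for M'
  proof -
    obtain L' where L': "(\<lambda>n. comm_prob G (M' n)) \<longlonglongrightarrow> L'" and dL': "dc_seq G M' = ereal L'"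
      using conv_seq[OF assms(1) p2 u2] by blast
    have "L = L'"
    proof (rule lim_eq_close[OF L L'], intro allI impI)
      fix e :: real assume "e > 0"
      from close_seq[OF assms(1,3) p2 assms(4) u2 this] obtain N where
        N: "\<forall>n\<ge>N. \<forall>k\<ge>N. \<bar>comm_prob G (M n) - comm_prob G (M' k)\<bar> < e" by blast
      show "\<exists>N. \<forall>n\<ge>N. \<bar>comm_prob G (M n) - comm_prob G (M' n)\<bar> < e"
      proof (intro exI[of _ N] allI impI)
        fix n assume "N \<le> n"
        thus "\<bar>comm_prob G (M n) - comm_prob G (M' n)\<bar> < e" using N by simp
      qed
    qed
    thus ?thesis using dL dL' by simp
  qed
  have c3: "ereal (dc_mean G m) = dc_seq G M" if lm: "left_inv_mean G m" for m
  proof -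
    have "(\<lambda>n. comm_prob G (M n)) \<longlonglongrightarrow> m (ff G)" by (rule mean_lim[OF assms(1) lm assms(3,4)])
    hence "m (ff G) = L" using L by (rule LIMSEQ_unique)
    thus ?thesis using dc_mean_ff[OF assms(1) lm] dL by simp
  qed
  show ?thesis
  proof (intro conjI allI impI)
    show "(\<lambda>n. ereal (comm_prob G (M n))) \<longlonglongrightarrow> dc_seq G M" by (rule c1)
  next
    fix M' assume "\<forall>n. prob_on G (M' n)" "measures_index_uniformly G M'"
    thus "dc_seq G M' = dc_seq G M" by (rule c2)
  next
    fix m assume "left_inv_mean G m"
    thus "ereal (dc_mean G m) = dc_seq G M" by (rule c3)
  qed
qed

end
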